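(* Let $\alpha\in(0,1]$, $r\in\mathbb{N}$, $\gamma=\alpha/(4\alpha+4d)$, $\mathcal{D}$ a dyadic grid, and let $S',R\in\mathcal{D}$ with $S'\subset R$ and $S'$ $r$-good. Let $x\in S'$, $t\in(\ell R/2,\ell R)$, and let $Q\in\mathcal{D}$ with $Q\supset S'$. Then there exists $\eta>0$ (depending only on $\alpha,d$) such that \[ K_t^{S'}\mathbf{1}_{\mathbb{R}^d\setminus Q}(x)\lesssim\left(\frac{\ell S'}{\max(\ell R^{(r)},\ell Q)}\right)^\eta,\qquad K_t^{S'}\mathbf{1}_Q(x)\lesssim\frac{|Q|}{|R|}\left(\frac{\ell S'}{\ell R}\right)^{\alpha/2}, \] with implicit constants depending only on $\alpha,d,r$.
   Context: $\mathbb{R}^d$ carries the $\ell^\infty$ metric. A dyadic grid is the standard grid $\mathcal{D}^0=\bigcup_j\{2^{-j}([0,1)^d+m):m\in\mathbb{Z}^d\}$ or a translate $\mathcal{D}^\omega=\{R+\sum_{i>j}\omega_i2^{-i}:R\in\mathcal{D}^0,\ \ell R=2^{-j}\}$. $R^{(r)}$ is the $r$-th dyadic ancestor of $R$. A cube $S'\in\mathcal{D}$ is $r$-good if $\operatorname{d}(S',\partial P)>(\ell S')^\gamma(\ell P)^{1-\gamma}$ for every $P\in\mathcal{D}$ with $\ell P\ge2^r\ell S'$. With $x_{S'}$ the centre of $S'$, \[K_t^{S'}f(x)=\int_{\mathbb{R}^d}\frac{(t|x-x_{S'}|)^{\alpha/2}}{(t+|x-y|)^{\alpha+d}}|f(y)|\,\mathrm{d}y.\]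 *)

theory Defs
  imports "HOL-Analysis.Analysis"
begin

definition linf :: "real ^ 'n \<Rightarrow> real" where
  "linf x = (MAX i. \<bar>x $ i\<bar>)"

definition linf_setdist :: "(real ^ 'n) set \<Rightarrow> (real ^ 'n) set \<Rightarrow> real" where
  "linf_setdist A B = Inf {linf (a - b) | a b. a \<in> A \<and> b \<in> B}"

text \<open>Dyadic grid parameter: \<omega> i \<in> {0,1}^d for every integer i (\<omega> = 0 gives the standard grid).
  Shift of generation j (side length 2^-j): sum over i > j of \<omega>_i 2^-i.\<close>
definition dshift :: "(int \<Rightarrow> 'n \<Rightarrow> bool) \<Rightarrow> int \<Rightarrow> 'n \<Rightarrow> real" where
  "dshift \<omega> j k = (\<Sum>n. (if \<omega> (j + 1 + int n) k then 1 else 0) * (2::real) powr (- real_of_int (j + 1 + int n)))"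

definition dcube :: "(int \<Rightarrow> 'n \<Rightarrow> bool) \<Rightarrow> int \<Rightarrow> ('n \<Rightarrow> int) \<Rightarrow> (real ^ 'n) set" where
  "dcube \<omega> j m = {x. \<forall>k. 2 powr (- real_of_int j) * real_of_int (m k) + dshift \<omega> j k \<le> x $ k
                        \<and> x $ k < 2 powr (- real_of_int j) * (real_of_int (m k) + 1) + dshift \<omega> j k}"

definition dgrid :: "(int \<Rightarrow> 'n \<Rightarrow> bool) \<Rightarrow> (real ^ 'n) set set" where
  "dgrid \<omega> = {dcube \<omega> j m | j m. True}"

definition dside :: "(int \<Rightarrow> 'n \<Rightarrow> bool) \<Rightarrow> (real ^ 'n) set \<Rightarrow> real" where
  "dside \<omega> Q = (THE l. \<exists>j m. Q = dcube \<omega> j m \<and> l = 2 powr (- real_of_int j))"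

definition dcenter :: "(int \<Rightarrow> 'n \<Rightarrow> bool) \<Rightarrow> (real ^ 'n) set \<Rightarrow> real ^ 'n" where
  "dcenter \<omega> Q = (THE c. \<exists>j m. Q = dcube \<omega> j m \<and>
      c = (\<chi> k. 2 powr (- real_of_int j) * (real_of_int (m k) + 1/2) + dshift \<omega> j k))"

definition dancestor :: "(int \<Rightarrow> 'n \<Rightarrow> bool) \<Rightarrow> nat \<Rightarrow> (real ^ 'n) set \<Rightarrow> (real ^ 'n) set" where
  "dancestor \<omega> r Q = (THE P. P \<in> dgrid \<omega> \<and> Q \<subseteq> P \<and> dside \<omega> P = 2 ^ r * dside \<omega> Q)"

definition r_good :: "(int \<Rightarrow> 'n \<Rightarrow> bool) \<Rightarrow> nat \<Rightarrow> real \<Rightarrow> (real ^ 'n) set \<Rightarrow> bool" where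
  "r_good \<omega> r \<gamma> S \<longleftrightarrow> (\<forall>P \<in> dgrid \<omega>. dside \<omega> P \<ge> 2 ^ r * dside \<omega> S \<longrightarrow>
      linf_setdist S (frontier P) > dside \<omega> S powr \<gamma> * dside \<omega> P powr (1 - \<gamma>))"

definition Kop :: "real \<Rightarrow> (int \<Rightarrow> 'n \<Rightarrow> bool) \<Rightarrow> real \<Rightarrow> (real ^ 'n) set \<Rightarrow> (real ^ 'n \<Rightarrow> real) \<Rightarrow> real ^ 'n \<Rightarrow> real" where
  "Kop \<alpha> \<omega> t S f x = (\<integral> y. (t * linf (x - dcenter \<omega> S)) powr (\<alpha> / 2)
        / (t + linf (x - y)) powr (\<alpha> + real CARD('n)) * \<bar>f y\<bar> \<partial>lborel)"

end

theory Submission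
  imports Defs
begin


lemma emeasure_box_cart:
  fixes a b :: "real ^ 'n"
  assumes "\<And>i. a $ i \<le> b $ i"
  shows "emeasure lborel (box a b) = ennreal (\<Prod>i\<in>UNIV. b $ i - a $ i)"
    and "emeasure lborel (cbox a b) = ennreal (\<Prod>i\<in>UNIV. b $ i - a $ i)"
proof -
  have p: "(\<Prod>c\<in>Basis. (b - a) \<bullet> c) = (\<Prod>i\<in>UNIV. b $ i - a $ i)"
    by (simp add: Basis_vec_def cart_eq_inner_axis axis_eq_axis prod.UNION_disjoint inner_diff_left)
  have c: "\<forall>c\<in>Basis. a \<bullet> c \<le> b \<bullet> c"
    using assms by (auto simp: Basis_vec_def cart_eq_inner_axis)
  show "emeasure lborel (box a b) = ennreal (\<Prod>i\<in>UNIV. b $ i - a $ i)"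
    using c p by (simp add: emeasure_lborel_box_eq)
  show "emeasure lborel (cbox a b) = ennreal (\<Prod>i\<in>UNIV. b $ i - a $ i)"
    using c p by (simp add: emeasure_lborel_cbox_eq)
qed

lemma linf_ge: "\<bar>x $ i\<bar> \<le> linf x"
  unfolding linf_def by (rule Max_ge) auto

lemma linf_nonneg: "0 \<le> linf x"
  using linf_ge[of x] abs_ge_zero order_trans by blast

lemma linf_less_iff: "linf x < r \<longleftrightarrow> (\<forall>i. \<bar>x $ i\<bar> < r)"
  unfolding linf_def by (subst Max_less_iff) auto

lemma linf_le_iff: "linf x \<le> r \<longleftrightarrow> (\<forall>i. \<bar>x $ i\<bar> \<le> r)"
  unfolding linf_def by (subst Max_le_iff) auto

lemma linf_attained: "\<exists>i. linf x = \<bar>x $ i\<bar>"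
proof -
  have "linf x \<in> range (\<lambda>i. \<bar>x $ i\<bar>)" unfolding linf_def by (rule Max_in) auto
  then show ?thesis by auto
qed

lemma linf_scale: "linf (c *\<^sub>R x) = \<bar>c\<bar> * linf x"
proof (rule antisym)
  show "linf (c *\<^sub>R x) \<le> \<bar>c\<bar> * linf x"
    unfolding linf_le_iff by (auto simp: abs_mult intro: mult_left_mono linf_ge)
  obtain i where i: "linf x = \<bar>x $ i\<bar>" using linf_attained by blast
  have "\<bar>c\<bar> * linf x = \<bar>(c *\<^sub>R x) $ i\<bar>" using i by (simp add: abs_mult)
  also have "\<dots> \<le> linf (c *\<^sub>R x)" by (rule linf_ge)
  finally show "\<bar>c\<bar> * linf x \<le> linf (c *\<^sub>R x)" .
qed

definition lbox :: "real ^ 'n \<Rightarrow> real \<Rightarrow> (real ^ 'n) set" where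
  "lbox x r = box (\<chi> i. x $ i - r) (\<chi> i. x $ i + r)"

lemma mem_lbox: "y \<in> lbox x r \<longleftrightarrow> linf (x - y) < r"
proof -
  have "\<And>i. (x $ i - r < y $ i \<and> y $ i < x $ i + r) = (\<bar>x $ i - y $ i\<bar> < r)" by arith
  then show ?thesis unfolding lbox_def mem_box_cart linf_less_iff by simp
qed

lemma lbox_sets[measurable]: "lbox x r \<in> sets lborel"
  unfolding lbox_def by simp

lemma emeasure_lbox: fixes x :: "real ^ 'n" shows "0 \<le> r \<Longrightarrow> emeasure lborel (lbox x r) = ennreal ((2 * r) ^ CARD('n))"
  unfolding lbox_def by (subst emeasure_box_cart) auto

lemma pw2: "(2::real) powr (- real_of_int (j + 1 + int n)) = 2 powr (- real_of_int (j+1)) * (1/2)^n"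
proof -
  have "(2::real) powr (- real_of_int (j + 1 + int n)) = 2 powr (- real_of_int (j+1)) * 2 powr (- real n)"
    by (simp add: powr_add[symmetric] algebra_simps)
  also have "(2::real) powr (- real n) = (1/2)^n"
    by (simp add: powr_minus powr_realpow power_divide inverse_eq_divide)
  finally show ?thesis .
qed

lemma dshift_summable:
  "summable (\<lambda>n. (if \<omega> (j + 1 + int n) k then 1 else 0) * (2::real) powr (- real_of_int (j + 1 + int n)))"
proof (rule summable_comparison_test)
  show "summable (\<lambda>n. 2 powr (- real_of_int (j+1)) * (1/2::real)^n)"
    by (intro summable_mult summable_geometric) auto
  show "\<exists>N. \<forall>n\<ge>N. norm ((if \<omega> (j + 1 + int n) k then 1 else 0) * (2::real) powr (- real_of_int (j + 1 + int n)))
      \<le> 2 powr (- real_of_int (j+1)) * (1/2::real)^n"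
  proof (intro exI[of _ 0] allI impI)
    fix n :: nat
    have "norm ((if \<omega> (j + 1 + int n) k then 1 else 0) * (2::real) powr (- real_of_int (j + 1 + int n)))
       \<le> 2 powr (- real_of_int (j + 1 + int n))" by simp
    then show "norm ((if \<omega> (j + 1 + int n) k then 1 else 0) * (2::real) powr (- real_of_int (j + 1 + int n)))
      \<le> 2 powr (- real_of_int (j+1)) * (1/2::real)^n" by (simp only: pw2)
  qed
qed

lemma dshift_step:
  "dshift \<omega> (j - 1) k = (if \<omega> j k then 1 else 0) * 2 powr (- real_of_int j) + dshift \<omega> j k"
proof -
  let ?f = "\<lambda>n. (if \<omega> (j - 1 + 1 + int n) k then 1 else 0) * (2::real) powr (- real_of_int (j - 1 + 1 + int n))"
  have s: "summable ?f" by (rule dshift_summable)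
  have "(\<Sum>n. ?f (Suc n)) = suminf ?f - ?f 0" by (rule suminf_split_head[OF s])
  moreover have "(\<lambda>n. ?f (Suc n)) = (\<lambda>n. (if \<omega> (j + 1 + int n) k then 1 else 0) * (2::real) powr (- real_of_int (j + 1 + int n)))"
    by (auto simp: algebra_simps)
  ultimately show ?thesis unfolding dshift_def by simp
qed

lemma dcube_mem: "x \<in> dcube \<omega> j m \<longleftrightarrow> (\<forall>k. 2 powr (- real_of_int j) * real_of_int (m k) + dshift \<omega> j k \<le> x $ k
                        \<and> x $ k < 2 powr (- real_of_int j) * (real_of_int (m k) + 1) + dshift \<omega> j k)"
  unfolding dcube_def by simp

definition corner :: "(int \<Rightarrow> 'n \<Rightarrow> bool) \<Rightarrow> int \<Rightarrow> ('n \<Rightarrow> int) \<Rightarrow> real ^ 'n" where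
  "corner \<omega> j m = (\<chi> k. 2 powr (- real_of_int j) * real_of_int (m k) + dshift \<omega> j k)"

lemma corner_mem: "corner \<omega> j m \<in> dcube \<omega> j m"
  unfolding dcube_mem corner_def by (simp add: algebra_simps)

lemma dcube_same_gen:
  assumes "x \<in> dcube \<omega> j m" "x \<in> dcube \<omega> j m'"
  shows "m = m'"
proof
  fix k
  let ?u = "(2::real) powr (- real_of_int j)"
  have u: "0 < ?u" by simp
  from assms have a: "?u * m k + dshift \<omega> j k \<le> x $ k" "x $ k < ?u * (m k + 1) + dshift \<omega> j k"
    and b: "?u * m' k + dshift \<omega> j k \<le> x $ k" "x $ k < ?u * (m' k + 1) + dshift \<omega> j k"
    unfolding dcube_mem by auto
  have "?u * m k < ?u * (m' k + 1)" using a b by linarith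
  then have "real_of_int (m k) < m' k + 1" using u by (simp only: mult_less_cancel_left_pos)
  moreover have "?u * m' k < ?u * (m k + 1)" using a b by linarith
  then have "real_of_int (m' k) < m k + 1" using u by (simp only: mult_less_cancel_left_pos)
  ultimately show "m k = m' k" by linarith
qed

lemma dcube_boxes:
  fixes \<omega> :: "int \<Rightarrow> 'n::finite \<Rightarrow> bool" and j :: int
  defines "u \<equiv> (2::real) powr (- real_of_int j)"
  shows "box (corner \<omega> j m) (corner \<omega> j m + (\<chi> k. u)) \<subseteq> dcube \<omega> j m"
    "dcube \<omega> j m \<subseteq> cbox (corner \<omega> j m) (corner \<omega> j m + (\<chi> k. u))"
  unfolding dcube_mem corner_def mem_box_cart u_def subset_iff by (auto simp: algebra_simps) (metis less_imp_le)+

lemma dcube_sets[measurable]: "dcube \<omega> j m \<in> sets lborel"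
proof -
  let ?lo = "\<lambda>k. 2 powr (- real_of_int j) * real_of_int (m k) + dshift \<omega> j k"
  let ?hi = "\<lambda>k. 2 powr (- real_of_int j) * (real_of_int (m k) + 1) + dshift \<omega> j k"
  have e: "dcube \<omega> j m = (\<Inter>k\<in>UNIV. {x. ?lo k \<le> x $ k} \<inter> {x. x $ k < ?hi k})"
    by (auto simp: dcube_def)
  have c: "closed {x::real^'a. ?lo k \<le> x $ k}" for k
    by (intro closed_Collect_le continuous_intros)
  have o: "open {x::real^'a. x $ k < ?hi k}" for k
    by (intro open_Collect_less continuous_intros)
  show ?thesis unfolding e
    by (intro sets.finite_INT sets.Int borel_closed borel_open c o) auto
qed

lemma emeasure_dcube:
  fixes \<omega> :: "int \<Rightarrow> 'n::finite \<Rightarrow> bool"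
  shows "emeasure lborel (dcube \<omega> j m) = ennreal ((2 powr (- real_of_int j)) ^ CARD('n))"
proof -
  let ?u = "(2::real) powr (- real_of_int j)"
  let ?a = "corner \<omega> j m" and ?b = "corner \<omega> j m + (\<chi> k. ?u)"
  have le: "\<And>i. ?a $ i \<le> ?b $ i" by simp
  have p: "(\<Prod>i\<in>UNIV. ?b $ i - ?a $ i) = ?u ^ CARD('n)" by simp
  have "emeasure lborel (box ?a ?b) \<le> emeasure lborel (dcube \<omega> j m)"
    by (rule emeasure_mono[OF dcube_boxes(1)]) (use dcube_sets in simp)
  moreover have "emeasure lborel (dcube \<omega> j m) \<le> emeasure lborel (cbox ?a ?b)"
    by (rule emeasure_mono[OF dcube_boxes(2)]) simp
  ultimately show ?thesis using emeasure_box_cart[OF le] p by simp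
qed

lemma measure_dcube:
  fixes \<omega> :: "int \<Rightarrow> 'n::finite \<Rightarrow> bool"
  shows "measure lborel (dcube \<omega> j m) = (2 powr (- real_of_int j)) ^ CARD('n)"
  unfolding measure_def emeasure_dcube by simp

lemma dcube_eq:
  fixes \<omega> :: "int \<Rightarrow> 'n::finite \<Rightarrow> bool"
  assumes "dcube \<omega> j m = dcube \<omega> j' m'"
  shows "j = j' \<and> m = m'"
proof -
  have "((2::real) powr (- real_of_int j)) ^ CARD('n) = (2 powr (- real_of_int j')) ^ CARD('n)"
    using measure_dcube[of \<omega> j m] measure_dcube[of \<omega> j' m'] assms by simp
  then have "(2::real) powr (- real_of_int j) = 2 powr (- real_of_int j')"
    by (simp add: power_eq_iff_eq_base)
  then have jj: "j = j'" by (simp add: powr_inj)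
  show ?thesis using jj dcube_same_gen[of "corner \<omega> j m" \<omega> j m m'] corner_mem[of \<omega> j m] assms by simp
qed

lemma dside_dcube: "dside \<omega> (dcube \<omega> j m) = 2 powr (- real_of_int j)"
  unfolding dside_def by (rule the_equality) (auto dest: dcube_eq)

lemma dcenter_dcube: "dcenter \<omega> (dcube \<omega> j m) =
   (\<chi> k. 2 powr (- real_of_int j) * (real_of_int (m k) + 1/2) + dshift \<omega> j k)"
  unfolding dcenter_def by (rule the_equality) (auto dest: dcube_eq)

lemma dcube_parent:
  "dcube \<omega> j m \<subseteq> dcube \<omega> (j - 1) (\<lambda>k. (m k - (if \<omega> j k then 1 else 0)) div 2)"
proof
  fix x assume x: "x \<in> dcube \<omega> j m"
  show "x \<in> dcube \<omega> (j - 1) (\<lambda>k. (m k - (if \<omega> j k then 1 else 0)) div 2)"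
    unfolding dcube_mem
  proof
    fix k
    let ?u = "(2::real) powr (- real_of_int j)"
    let ?b = "(if \<omega> j k then 1 else 0) :: int"
    let ?m = "(m k - ?b) div 2"
    have u: "0 < ?u" by simp
    have u2: "(2::real) powr (- real_of_int (j - 1)) = 2 * ?u"
      using powr_add[of 2 1 "- real_of_int j"] by simp
    have ds: "dshift \<omega> (j - 1) k = real_of_int ?b * ?u + dshift \<omega> j k"
      using dshift_step[of \<omega> j k] by simp
    from x have a: "?u * m k + dshift \<omega> j k \<le> x $ k" "x $ k < ?u * (m k + 1) + dshift \<omega> j k"
      unfolding dcube_mem by auto
    have i1: "2 * ?m + ?b \<le> m k" and i2: "m k + 1 \<le> 2 * ?m + 2 + ?b" by linarith+
    have r1: "real_of_int (2 * ?m + ?b) \<le> real_of_int (m k)" using i1 by linarith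
    have r2: "real_of_int (m k + 1) \<le> real_of_int (2 * ?m + 2 + ?b)" using i2 by linarith
    have "?u * real_of_int (2 * ?m + ?b) \<le> ?u * real_of_int (m k)"
      using r1 u by (intro mult_left_mono) auto
    moreover have "?u * real_of_int (m k + 1) \<le> ?u * real_of_int (2 * ?m + 2 + ?b)"
      using r2 u by (intro mult_left_mono) auto
    ultimately show "2 powr - real_of_int (j - 1) * real_of_int ?m + dshift \<omega> (j - 1) k \<le> x $ k \<and>
         x $ k < 2 powr - real_of_int (j - 1) * (real_of_int ?m + 1) + dshift \<omega> (j - 1) k"
      using a unfolding u2 ds by (simp add: algebra_simps)
  qed
qed

lemma dcube_ancestor_ex: "\<exists>m'. dcube \<omega> j m \<subseteq> dcube \<omega> (j - int r) m'"
proof (induction r)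
  case 0 then show ?case by auto
next
  case (Suc r)
  then obtain m' where "dcube \<omega> j m \<subseteq> dcube \<omega> (j - int r) m'" by blast
  moreover have "dcube \<omega> (j - int r) m' \<subseteq> dcube \<omega> (j - int r - 1) (\<lambda>k. (m' k - (if \<omega> (j - int r) k then 1 else 0)) div 2)"
    by (rule dcube_parent)
  ultimately show ?case by (auto simp: algebra_simps)
qed

lemma dside_dancestor:
  fixes \<omega> :: "int \<Rightarrow> 'n::finite \<Rightarrow> bool"
  assumes R: "R \<in> dgrid \<omega>"
  shows "dside \<omega> (dancestor \<omega> r R) = 2 ^ r * dside \<omega> R"
proof -
  obtain j m where Rj: "R = dcube \<omega> j m" using R unfolding dgrid_def by blast
  obtain m' where sub: "R \<subseteq> dcube \<omega> (j - int r) m'" using dcube_ancestor_ex Rj by blast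
  have pw: "(2::real) powr (- real_of_int (j - int r)) = 2 ^ r * 2 powr (- real_of_int j)"
    by (simp add: powr_add[symmetric] powr_realpow[symmetric] algebra_simps)
  have "dancestor \<omega> r R = dcube \<omega> (j - int r) m'"
    unfolding dancestor_def
  proof (rule the_equality)
    show "dcube \<omega> (j - int r) m' \<in> dgrid \<omega> \<and> R \<subseteq> dcube \<omega> (j - int r) m' \<and>
        dside \<omega> (dcube \<omega> (j - int r) m') = 2 ^ r * dside \<omega> R"
      using sub unfolding Rj dside_dcube pw dgrid_def by auto
  next
    fix P assume P: "P \<in> dgrid \<omega> \<and> R \<subseteq> P \<and> dside \<omega> P = 2 ^ r * dside \<omega> R"
    then obtain j' m2 where Pj: "P = dcube \<omega> j' m2" unfolding dgrid_def by blast
    have "(2::real) powr (- real_of_int j') = 2 powr (- real_of_int (j - int r))"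
      using P unfolding Pj Rj dside_dcube pw by simp
    then have jj: "j' = j - int r" by (simp add: powr_inj)
    have "corner \<omega> j m \<in> P" "corner \<omega> j m \<in> dcube \<omega> (j - int r) m'"
      using P sub corner_mem[of \<omega> j m] Rj by auto
    then have "m2 = m'" using dcube_same_gen Pj jj by blast
    then show "P = dcube \<omega> (j - int r) m'" using Pj jj by simp
  qed
  then have "dside \<omega> (dancestor \<omega> r R) = 2 powr (- real_of_int (j - int r))" by (simp only: dside_dcube)
  also have "\<dots> = 2 ^ r * 2 powr (- real_of_int j)" by (rule pw)
  finally show ?thesis using Rj by (simp only: dside_dcube)
qed



lemma term_eq:
  fixes D \<alpha> d :: real and i n :: nat
  assumes D: "0 < D" and dn: "d = real n"
  shows "(2 ^ i * D) powr (- (\<alpha> + d)) * (2 * (2 ^ (i + 1) * D)) ^ n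
       = 4 powr d * D powr (- \<alpha>) * (2 powr (- \<alpha>)) ^ i"
proof -
  have e1: "(2 * (2 ^ (i + 1) * D)) ^ n = (2 * (2 ^ (i + 1) * D)) powr d"
    using D dn by (simp add: powr_realpow)
  have e2: "(2::real) * (2 ^ (i + 1) * D) = 2 powr (real i + 2) * D"
    by (simp add: powr_add powr_realpow)
  have e3: "(2::real) ^ i * D = 2 powr (real i) * D"
    by (simp add: powr_realpow)
  have e4: "(2 powr (- \<alpha>)) ^ i = (2::real) powr (- \<alpha> * real i)"
    by (simp add: powr_realpow[symmetric] powr_powr)
  have e5: "(4::real) powr d = 2 powr (2 * d)"
    using powr_powr[of 2 2 d] by simp
  have "(2 ^ i * D) powr (- (\<alpha> + d)) * (2 * (2 ^ (i + 1) * D)) ^ n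
      = (2 powr (real i) * D) powr (- (\<alpha> + d)) * (2 powr (real i + 2) * D) powr d"
    unfolding e1 unfolding e2 e3 ..
  also have "\<dots> = 2 powr (real i * (- (\<alpha> + d))) * D powr (- (\<alpha> + d)) * (2 powr ((real i + 2) * d) * D powr d)"
    using D by (simp add: powr_mult powr_powr)
  also have "\<dots> = 2 powr (real i * (- (\<alpha> + d)) + (real i + 2) * d) * D powr (- (\<alpha> + d) + d)"
    by (simp only: powr_add mult_ac)
  also have "real i * (- (\<alpha> + d)) + (real i + 2) * d = 2 * d + - \<alpha> * real i" by (simp add: algebra_simps)
  also have "- (\<alpha> + d) + d = - \<alpha>" by simp
  also have "(2::real) powr (2 * d + - \<alpha> * real i) = 2 powr (2 * d) * 2 powr (- \<alpha> * real i)" by (rule powr_add)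
  finally show ?thesis unfolding e4 e5 by simp
qed

definition tser :: "real \<Rightarrow> real \<Rightarrow> real ^ 'n \<Rightarrow> real ^ 'n \<Rightarrow> ennreal" where
  "tser \<beta> D x y = (\<Sum>i. ennreal ((2 ^ i * D) powr (- \<beta>)) * indicator (lbox x (2 ^ (i + 1) * D)) y)"

lemma tser_point:
  assumes D: "0 < D" and b: "0 \<le> \<beta>" and le: "D \<le> linf (x - y)"
  shows "ennreal (linf (x - y) powr (- \<beta>)) \<le> tser \<beta> D x y"
proof -
  let ?\<rho> = "linf (x - y)"
  let ?z = "?\<rho> / D"
  have z1: "1 \<le> ?z" using D le by simp
  define k where "k = nat \<lfloor>log 2 ?z\<rfloor>"
  have lg: "0 \<le> log 2 ?z" using z1 by simp
  have kk: "real k = of_int \<lfloor>log 2 ?z\<rfloor>" unfolding k_def using lg by simp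
  have "(2::real) ^ k = 2 powr (real k)" by (simp add: powr_realpow)
  also have "\<dots> \<le> 2 powr (log 2 ?z)" unfolding kk by (intro powr_mono) auto
  also have "\<dots> = ?z" using z1 by simp
  finally have k1: "2 ^ k \<le> ?z" .
  have "?z = 2 powr (log 2 ?z)" using z1 by simp
  also have "\<dots> < 2 powr (real k + 1)" unfolding kk by (intro powr_less_mono) linarith+
  also have "\<dots> = 2 ^ (k + 1)" by (simp add: powr_add powr_realpow)
  finally have k2: "?z < 2 ^ (k + 1)" .
  have a: "2 ^ k * D \<le> ?\<rho>" using k1 D by (simp add: field_simps)
  have bb: "?\<rho> < 2 ^ (k + 1) * D" using k2 D by (simp add: field_simps)
  have pos: "0 < 2 ^ k * D" using D by simp
  have "?\<rho> powr (- \<beta>) \<le> (2 ^ k * D) powr (- \<beta>)"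
    using a pos b by (intro powr_mono2') auto
  then have "ennreal (?\<rho> powr (- \<beta>)) \<le> ennreal ((2 ^ k * D) powr (- \<beta>)) * indicator (lbox x (2 ^ (k + 1) * D)) y"
    using bb by (simp add: mem_lbox)
  also have "\<dots> \<le> tser \<beta> D x y"
  proof -
    let ?f = "\<lambda>i. ennreal ((2 ^ i * D) powr (- \<beta>)) * indicator (lbox x (2 ^ (i + 1) * D)) y"
    have "sum ?f {k} \<le> suminf ?f" by (rule sum_le_suminf) auto
    then show ?thesis unfolding tser_def by (simp only: sum.insert_if finite.emptyI empty_iff if_False sum.empty add_0_right)
  qed
  finally show ?thesis .
qed

lemma tser_int:
  fixes x :: "real ^ 'n"
  assumes D: "0 < D" and a: "0 < \<alpha>"
  shows "(\<integral>\<^sup>+ y. tser (\<alpha> + real CARD('n)) D x y \<partial>lborel)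
     = ennreal (4 powr real CARD('n) * D powr (- \<alpha>) / (1 - 2 powr (- \<alpha>)))"
proof -
  let ?d = "real CARD('n)"
  let ?q = "(2::real) powr (- \<alpha>)"
  have q0: "0 < ?q" by simp
  have q1: "?q < 1" using powr_less_mono[of "- \<alpha>" 0 2] a by simp
  have "(\<integral>\<^sup>+ y. tser (\<alpha> + ?d) D x y \<partial>lborel)
     = (\<Sum>i. \<integral>\<^sup>+ y. ennreal ((2 ^ i * D) powr (- (\<alpha> + ?d))) * indicator (lbox x (2 ^ (i + 1) * D)) y \<partial>lborel)"
    unfolding tser_def by (rule nn_integral_suminf) simp
  also have "\<dots> = (\<Sum>i. ennreal (4 powr ?d * D powr (- \<alpha>) * ?q ^ i))"
  proof (rule suminf_cong)
    fix i
    have "(\<integral>\<^sup>+ y. ennreal ((2 ^ i * D) powr (- (\<alpha> + ?d))) * indicator (lbox x (2 ^ (i + 1) * D)) y \<partial>lborel)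
       = ennreal ((2 ^ i * D) powr (- (\<alpha> + ?d))) * emeasure lborel (lbox x (2 ^ (i + 1) * D))"
      by (rule nn_integral_cmult_indicator) (use lbox_sets in simp)
    also have "\<dots> = ennreal ((2 ^ i * D) powr (- (\<alpha> + ?d)) * (2 * (2 ^ (i + 1) * D)) ^ CARD('n))"
      using D by (simp add: emeasure_lbox ennreal_mult)
    also have "\<dots> = ennreal (4 powr ?d * D powr (- \<alpha>) * ?q ^ i)"
      using term_eq[OF D refl] by simp
    finally show "(\<integral>\<^sup>+ y. ennreal ((2 ^ i * D) powr (- (\<alpha> + ?d))) * indicator (lbox x (2 ^ (i + 1) * D)) y \<partial>lborel)
       = ennreal (4 powr ?d * D powr (- \<alpha>) * ?q ^ i)" .
  qed
  also have "\<dots> = ennreal (\<Sum>i. 4 powr ?d * D powr (- \<alpha>) * ?q ^ i)"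
    using q0 q1 by (intro suminf_ennreal2) (auto intro!: summable_mult summable_geometric)
  also have "(\<Sum>i. 4 powr ?d * D powr (- \<alpha>) * ?q ^ i) = 4 powr ?d * D powr (- \<alpha>) * (1 / (1 - ?q))"
    using q0 q1 by (subst suminf_mult) (auto intro!: summable_geometric simp: suminf_geometric)
  finally show ?thesis by simp
qed



lemma dist_frontier:
  fixes x y :: "real ^ 'n"
  assumes x: "x \<in> S" and SQ: "S \<subseteq> Q" and y: "y \<notin> Q"
  shows "linf_setdist S (frontier Q) \<le> linf (x - y)"
proof -
  have "closed_segment x y \<inter> frontier Q \<noteq> {}"
    using x SQ y by (intro connected_Int_frontier[OF connected_segment]) auto
  then obtain z where zs: "z \<in> closed_segment x y" and zf: "z \<in> frontier Q" by blast
  then obtain u where u: "0 \<le> u" "u \<le> 1" "z = (1 - u) *\<^sub>R x + u *\<^sub>R y" by (auto simp: in_segment)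
  have "x - z = u *\<^sub>R (x - y)" using u by (simp add: algebra_simps)
  then have "linf (x - z) = u * linf (x - y)" using u by (simp add: linf_scale)
  also have "\<dots> \<le> linf (x - y)" using u linf_nonneg[of "x - y"] by (simp add: mult_left_le_one_le)
  finally have le: "linf (x - z) \<le> linf (x - y)" .
  have "linf_setdist S (frontier Q) \<le> linf (x - z)"
    unfolding linf_setdist_def
  proof (rule cInf_lower)
    show "linf (x - z) \<in> {linf (a - b) |a b. a \<in> S \<and> b \<in> frontier Q}" using x zf by blast
    show "bdd_below {linf (a - b) |a b. a \<in> S \<and> b \<in> frontier Q}"
      unfolding bdd_below_def using linf_nonneg by blast
  qed
  then show ?thesis using le by simp
qed

lemma tser_meas[measurable]: "(\<lambda>y. tser \<beta> D x y) \<in> borel_measurable lborel"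
  unfolding tser_def by measurable

lemma K_whole:
  fixes x :: "real ^ 'n"
  assumes t: "0 < t" and a: "0 < \<alpha>" and c: "0 \<le> c"
  shows "(\<integral>\<^sup>+ y. ennreal (c * (t + linf (x - y)) powr (- (\<alpha> + real CARD('n)))) \<partial>lborel)
    \<le> ennreal (c * ((2 ^ CARD('n) + 4 powr real CARD('n) / (1 - 2 powr (- \<alpha>))) * t powr (- \<alpha>)))"
proof -
  let ?d = "real CARD('n)"
  let ?b = "\<alpha> + ?d"
  let ?T = "4 powr real CARD('n) / (1 - 2 powr (- \<alpha>))"
  have q1: "2 powr (- \<alpha>) < 1" using powr_less_mono[of "- \<alpha>" 0 2] a by simp
  have T0: "0 \<le> ?T" using q1 by simp
  have pt: "ennreal (c * (t + linf (x - y)) powr (- ?b))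
      \<le> ennreal (c * t powr (- ?b)) * indicator (lbox x t) y + ennreal c * tser ?b t x y" for y
  proof (cases "linf (x - y) < t")
    case True
    have "(t + linf (x - y)) powr (- ?b) \<le> t powr (- ?b)"
      using t linf_nonneg[of "x - y"] a by (intro powr_mono2') auto
    then have "c * (t + linf (x - y)) powr (- ?b) \<le> c * t powr (- ?b)" using c by (rule mult_left_mono)
    then have e1: "ennreal (c * (t + linf (x - y)) powr (- ?b)) \<le> ennreal (c * t powr (- ?b))" by (rule ennreal_leI)
    have e2: "ennreal (c * t powr (- ?b)) \<le> ennreal (c * t powr (- ?b)) * indicator (lbox x t) y + ennreal c * tser ?b t x y"
      using True by (simp add: mem_lbox)
    show ?thesis using e1 e2 by (rule order_trans)
  next
    case False
    have "(t + linf (x - y)) powr (- ?b) \<le> linf (x - y) powr (- ?b)"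
      using t False a by (intro powr_mono2') auto
    then have "ennreal (c * (t + linf (x - y)) powr (- ?b)) \<le> ennreal c * ennreal (linf (x - y) powr (- ?b))"
      using c by (simp add: ennreal_mult[symmetric] mult_left_mono)
    also have "\<dots> \<le> ennreal c * tser ?b t x y" using False t a by (intro mult_left_mono tser_point) auto
    finally show ?thesis by (simp add: add_increasing)
  qed
  have "(\<integral>\<^sup>+ y. ennreal (c * (t + linf (x - y)) powr (- ?b)) \<partial>lborel)
     \<le> (\<integral>\<^sup>+ y. ennreal (c * t powr (- ?b)) * indicator (lbox x t) y + ennreal c * tser ?b t x y \<partial>lborel)"
    by (rule nn_integral_mono) (rule pt)
  also have "\<dots> = (\<integral>\<^sup>+ y. ennreal (c * t powr (- ?b)) * indicator (lbox x t) y \<partial>lborel) + (\<integral>\<^sup>+ y. ennreal c * tser ?b t x y \<partial>lborel)"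
    by (rule nn_integral_add) auto
  also have "(\<integral>\<^sup>+ y. ennreal (c * t powr (- ?b)) * indicator (lbox x t) y \<partial>lborel) = ennreal (c * t powr (- ?b)) * emeasure lborel (lbox x t)"
    by (rule nn_integral_cmult_indicator) (use lbox_sets in simp)
  also have "\<dots> = ennreal (c * t powr (- ?b) * (2 * t) ^ CARD('n))"
    using t c by (simp add: emeasure_lbox ennreal_mult)
  also have "c * t powr (- ?b) * (2 * t) ^ CARD('n) = c * (2 ^ CARD('n) * t powr (- \<alpha>))"
  proof -
    have "(2 * t) ^ CARD('n) = 2 ^ CARD('n) * t powr ?d" using t by (simp add: power_mult_distrib powr_realpow)
    moreover have "t powr (- ?b) * t powr ?d = t powr (- \<alpha>)" by (simp add: powr_add[symmetric])
    ultimately show ?thesis by (simp add: algebra_simps)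
  qed
  also have "(\<integral>\<^sup>+ y. ennreal c * tser ?b t x y \<partial>lborel) = ennreal c * (\<integral>\<^sup>+ y. tser ?b t x y \<partial>lborel)"
    by (rule nn_integral_cmult) simp
  also have "(\<integral>\<^sup>+ y. tser ?b t x y \<partial>lborel) = ennreal (?T * t powr (- \<alpha>))"
    using tser_int[OF t a, of x] by (simp add: algebra_simps)
  also have "ennreal (c * (2 ^ CARD('n) * t powr (- \<alpha>))) + ennreal c * ennreal (?T * t powr (- \<alpha>))
      = ennreal (c * ((2 ^ CARD('n) + ?T) * t powr (- \<alpha>)))"
  proof -
    have n1: "0 \<le> c * (2 ^ CARD('n) * t powr (- \<alpha>))" using c by simp
    have n2: "0 \<le> c * (?T * t powr (- \<alpha>))" using T0 c by (intro mult_nonneg_nonneg) auto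
    have n3: "0 \<le> ?T * t powr (- \<alpha>)" using T0 by (intro mult_nonneg_nonneg) auto
    have "ennreal c * ennreal (?T * t powr (- \<alpha>)) = ennreal (c * (?T * t powr (- \<alpha>)))"
      by (rule ennreal_mult[OF c n3, symmetric])
    then show ?thesis using ennreal_plus[OF n1 n2] by (simp add: algebra_simps)
  qed
  finally show ?thesis .
qed

lemma dcenter_close:
  assumes "x \<in> dcube \<omega> j m"
  shows "linf (x - dcenter \<omega> (dcube \<omega> j m)) \<le> 2 powr (- real_of_int j)"
  unfolding linf_le_iff dcenter_dcube
proof
  fix k
  let ?u = "(2::real) powr (- real_of_int j)"
  from assms have a: "?u * m k + dshift \<omega> j k \<le> x $ k" "x $ k < ?u * (m k + 1) + dshift \<omega> j k"
    unfolding dcube_mem by auto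
  have u: "0 < ?u" by simp
  show "\<bar>(x - (\<chi> k. ?u * (real_of_int (m k) + 1 / 2) + dshift \<omega> j k)) $ k\<bar> \<le> ?u"
    using a u by (simp add: algebra_simps abs_le_iff)
qed

lemma measure_grid:
  fixes \<omega> :: "int \<Rightarrow> 'n::finite \<Rightarrow> bool"
  assumes "Q \<in> dgrid \<omega>"
  shows "measure lborel Q = dside \<omega> Q ^ CARD('n)" "emeasure lborel Q = ennreal (dside \<omega> Q ^ CARD('n))"
    "0 < dside \<omega> Q" "Q \<in> sets lborel"
  using assms dcube_sets by (auto simp: dgrid_def measure_dcube emeasure_dcube dside_dcube)

lemma dside_mono:
  fixes \<omega> :: "int \<Rightarrow> 'n::finite \<Rightarrow> bool"
  assumes S: "S \<in> dgrid \<omega>" and R: "R \<in> dgrid \<omega>" and SR: "S \<subseteq> R"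
  shows "dside \<omega> S \<le> dside \<omega> R"
proof -
  have "emeasure lborel S \<le> emeasure lborel R" by (rule emeasure_mono[OF SR]) (use measure_grid[OF R] in simp)
  then have "dside \<omega> S ^ CARD('n) \<le> dside \<omega> R ^ CARD('n)"
    using measure_grid[OF S] measure_grid[OF R] by (simp add: ennreal_le_iff)
  moreover have "0 < CARD('n)" by simp
  then obtain n where "CARD('n) = Suc n" using not0_implies_Suc by blast
  ultimately show ?thesis using power_le_imp_le_base measure_grid(3)[OF R] by (metis less_imp_le)
qed



lemma alg_split:
  fixes t s a :: real assumes "0 < t" "0 < s"
  shows "(t * s) powr a * t powr b = s powr a * t powr (a + b)"
  using assms by (simp add: powr_mult powr_add)

lemma alg2:
  fixes s L t \<alpha> d :: real
  assumes s: "0 < s" and L: "0 < L" and t: "L / 2 < t" and a: "0 < \<alpha>" and d: "0 \<le> d"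
  shows "(t * s) powr (\<alpha> / 2) * t powr (- (\<alpha> + d)) \<le> 2 powr (\<alpha> / 2 + d) * ((s / L) powr (\<alpha> / 2) / L powr d)"
proof -
  have t0: "0 < t" using L t by linarith
  have "(t * s) powr (\<alpha> / 2) * t powr (- (\<alpha> + d)) = s powr (\<alpha> / 2) * t powr (- (\<alpha> / 2 + d))"
    using alg_split[OF t0 s] by simp
  also have "\<dots> \<le> s powr (\<alpha> / 2) * (L / 2) powr (- (\<alpha> / 2 + d))"
    using t L a d by (intro mult_left_mono powr_mono2') auto
  also have "\<dots> = 2 powr (\<alpha> / 2 + d) * ((s / L) powr (\<alpha> / 2) / L powr d)"
    using s L by (simp add: powr_def exp_add[symmetric] exp_diff[symmetric] ln_div field_simps)
  finally show ?thesis .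
qed

lemma alga:
  fixes s L t \<alpha> :: real
  assumes s: "0 < s" and L: "0 < L" and t: "L / 2 < t" and a: "0 < \<alpha>"
  shows "(t * s) powr (\<alpha> / 2) * t powr (- \<alpha>) \<le> 2 powr (\<alpha> / 2) * (s / L) powr (\<alpha> / 2)"
proof -
  have t0: "0 < t" using L t by linarith
  have "(t * s) powr (\<alpha> / 2) * t powr (- \<alpha>) = s powr (\<alpha> / 2) * t powr (- (\<alpha> / 2))"
    using alg_split[OF t0 s] by simp
  also have "\<dots> \<le> s powr (\<alpha> / 2) * (L / 2) powr (- (\<alpha> / 2))"
    using t L a by (intro mult_left_mono powr_mono2') auto
  also have "\<dots> = 2 powr (\<alpha> / 2) * (s / L) powr (\<alpha> / 2)"
    using s L by (simp add: powr_def exp_add[symmetric] exp_diff[symmetric] ln_div field_simps)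
  finally show ?thesis .
qed

lemma algM:
  fixes s L \<alpha> :: real and r :: nat
  assumes s: "0 < s" and L: "0 < L"
  shows "(s / L) powr (\<alpha> / 2) = 2 powr (\<alpha> / 2 * real r) * (s / (2 ^ r * L)) powr (\<alpha> / 2)"
proof -
  have "(2::real) ^ r = 2 powr real r" by (simp add: powr_realpow)
  then show ?thesis
    using s L by (simp add: powr_def exp_add[symmetric] exp_diff[symmetric] ln_div ln_mult field_simps)
qed

lemma algb:
  fixes s q \<alpha> \<gamma> :: real
  assumes s: "0 < s" and q: "0 < q"
  shows "(q * s) powr (\<alpha> / 2) * (s powr \<gamma> * q powr (1 - \<gamma>)) powr (- \<alpha>) = (s / q) powr (\<alpha> / 2 - \<gamma> * \<alpha>)"
  using s q by (simp add: powr_def exp_add[symmetric] exp_diff[symmetric] ln_div ln_mult field_simps)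



theorem lemma7p4:
  fixes \<alpha> :: real
  assumes "0 < \<alpha>" "\<alpha> \<le> 1"
  shows "\<exists>\<eta>>0. \<forall>r::nat. \<exists>C>0. \<forall>(\<omega>::int \<Rightarrow> 'n::finite \<Rightarrow> bool) S R Q x t.
     S \<in> dgrid \<omega> \<longrightarrow> R \<in> dgrid \<omega> \<longrightarrow> S \<subseteq> R \<longrightarrow>
     r_good \<omega> r (\<alpha> / (4 * \<alpha> + 4 * real CARD('n))) S \<longrightarrow>
     x \<in> S \<longrightarrow> dside \<omega> R / 2 < t \<longrightarrow> t < dside \<omega> R \<longrightarrow>
     Q \<in> dgrid \<omega> \<longrightarrow> S \<subseteq> Q \<longrightarrow>
     Kop \<alpha> \<omega> t S (indicator (UNIV - Q)) x
        \<le> C * (dside \<omega> S / max (dside \<omega> (dancestor \<omega> r R)) (dside \<omega> Q)) powr \<eta>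
     \<and> Kop \<alpha> \<omega> t S (indicator Q) x
        \<le> C * (measure lborel Q / measure lborel R) * (dside \<omega> S / dside \<omega> R) powr (\<alpha> / 2)"
proof -
  have a: "0 < \<alpha>" using assms by simp
  define d where "d = real CARD('n)"
  have d0: "0 \<le> d" unfolding d_def by simp
  define T where "T = 4 powr d / (1 - 2 powr (- \<alpha>))"
  define Kw where "Kw = 2 ^ CARD('n) + T"
  define \<gamma> where "\<gamma> = \<alpha> / (4 * \<alpha> + 4 * d)"
  have q1: "2 powr (- \<alpha>) < 1" using powr_less_mono[of "- \<alpha>" 0 2] a by simp
  have T0: "0 \<le> T" unfolding T_def using q1 by simp
  have Kw0: "0 < Kw" unfolding Kw_def using T0 by (simp add: add_pos_nonneg)
  have g0: "0 \<le> \<gamma>" unfolding \<gamma>_def using a d0 by simp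
  have g4: "\<gamma> \<le> 1 / 4" unfolding \<gamma>_def using a d0 by (simp add: field_simps)
  show ?thesis
  proof (rule exI[of _ "\<alpha> / 4"], intro conjI allI)
    show "0 < \<alpha> / 4" using a by simp
    fix r :: nat
    define C where "C = Kw * 2 powr (\<alpha> / 2 * real (r + 1)) + T + 2 powr (\<alpha> / 2 + d)"
    have C1: "Kw * 2 powr (\<alpha> / 2 * real (r + 1)) \<le> C" and C2: "T \<le> C" and C3: "2 powr (\<alpha> / 2 + d) \<le> C"
      unfolding C_def using Kw0 T0 by auto
    show "\<exists>C>0. \<forall>(\<omega>::int \<Rightarrow> 'n::finite \<Rightarrow> bool) S R Q x t.
     S \<in> dgrid \<omega> \<longrightarrow> R \<in> dgrid \<omega> \<longrightarrow> S \<subseteq> R \<longrightarrow>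
     r_good \<omega> r (\<alpha> / (4 * \<alpha> + 4 * real CARD('n))) S \<longrightarrow>
     x \<in> S \<longrightarrow> dside \<omega> R / 2 < t \<longrightarrow> t < dside \<omega> R \<longrightarrow>
     Q \<in> dgrid \<omega> \<longrightarrow> S \<subseteq> Q \<longrightarrow>
     Kop \<alpha> \<omega> t S (indicator (UNIV - Q)) x
        \<le> C * (dside \<omega> S / max (dside \<omega> (dancestor \<omega> r R)) (dside \<omega> Q)) powr (\<alpha> / 4)
     \<and> Kop \<alpha> \<omega> t S (indicator Q) x
        \<le> C * (measure lborel Q / measure lborel R) * (dside \<omega> S / dside \<omega> R) powr (\<alpha> / 2)"
    proof (intro exI[of _ C] conjI allI impI)
      show "0 < C" using C2 C3 by (smt (verit) powr_gt_zero)
      fix \<omega> :: "int \<Rightarrow> 'n::finite \<Rightarrow> bool" and S R Q x t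
      assume S: "S \<in> dgrid \<omega>" and R: "R \<in> dgrid \<omega>" and SR: "S \<subseteq> R"
        and good: "r_good \<omega> r (\<alpha> / (4 * \<alpha> + 4 * real CARD('n))) S"
        and x: "x \<in> S" and t1: "dside \<omega> R / 2 < t" and t2: "t < dside \<omega> R"
        and Q: "Q \<in> dgrid \<omega>" and SQ: "S \<subseteq> Q"
      obtain j m where Sj: "S = dcube \<omega> j m" using S unfolding dgrid_def by blast
      define s where "s = dside \<omega> S"
      define L where "L = dside \<omega> R"
      define lq where "lq = dside \<omega> Q"
      have s0: "0 < s" and L0: "0 < L" and lq0: "0 < lq"
        unfolding s_def L_def lq_def using measure_grid(3) S R Q by auto
      have sL: "s \<le> L" unfolding s_def L_def by (rule dside_mono[OF S R SR])
      have slq: "s \<le> lq" unfolding s_def lq_def by (rule dside_mono[OF S Q SQ])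
      have t0: "0 < t" using t1 L0 L_def by linarith
      define c where "c = dcenter \<omega> S"
      have xc: "linf (x - c) \<le> s"
        unfolding c_def s_def Sj dside_dcube using dcenter_close x Sj by blast
      define A where "A = (t * linf (x - c)) powr (\<alpha> / 2)"
      have A0: "0 \<le> A" unfolding A_def by simp
      have AA: "A \<le> (t * s) powr (\<alpha> / 2)" unfolding A_def
        using t0 xc linf_nonneg[of "x - c"] a by (intro powr_mono2) (auto intro: mult_left_mono)
      have Kop_eq: "Kop \<alpha> \<omega> t S f x = (\<integral> y. A * (t + linf (x - y)) powr (- (\<alpha> + d)) * \<bar>f y\<bar> \<partial>lborel)" for f
        unfolding Kop_def A_def c_def d_def
        by (intro Bochner_Integration.integral_cong refl) (simp only: powr_minus divide_inverse)
      show "Kop \<alpha> \<omega> t S (indicator Q) x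
        \<le> C * (measure lborel Q / measure lborel R) * (dside \<omega> S / dside \<omega> R) powr (\<alpha> / 2)"
      proof -
        have pt: "ennreal (A * (t + linf (x - y)) powr (- (\<alpha> + d)) * \<bar>indicator Q y\<bar>)
            \<le> ennreal (A * t powr (- (\<alpha> + d))) * indicator Q y" for y
        proof (cases "y \<in> Q")
          case True
          have "(t + linf (x - y)) powr (- (\<alpha> + d)) \<le> t powr (- (\<alpha> + d))"
            using t0 linf_nonneg[of "x - y"] a d0 by (intro powr_mono2') auto
          then have "A * (t + linf (x - y)) powr (- (\<alpha> + d)) \<le> A * t powr (- (\<alpha> + d))"
            using A0 by (rule mult_left_mono)
          then show ?thesis using True by (simp add: ennreal_leI)
        qed simp
        have "(\<integral>\<^sup>+ y. ennreal (A * (t + linf (x - y)) powr (- (\<alpha> + d)) * \<bar>indicator Q y\<bar>) \<partial>lborel)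
            \<le> (\<integral>\<^sup>+ y. ennreal (A * t powr (- (\<alpha> + d))) * indicator Q y \<partial>lborel)"
          by (rule nn_integral_mono) (rule pt)
        also have "\<dots> = ennreal (A * t powr (- (\<alpha> + d))) * emeasure lborel Q"
          by (rule nn_integral_cmult_indicator) (use measure_grid(4)[OF Q] in simp)
        also have "\<dots> = ennreal (A * t powr (- (\<alpha> + d)) * lq ^ CARD('n))"
        proof -
          have e: "emeasure lborel Q = ennreal (lq ^ CARD('n))" using measure_grid(2)[OF Q] lq_def by simp
          have n1: "0 \<le> A * t powr (- (\<alpha> + d))" using A0 by simp
          have n2: "0 \<le> lq ^ CARD('n)" using lq0 by simp
          show ?thesis unfolding e by (rule ennreal_mult[OF n1 n2, symmetric])
        qed
        finally have "Kop \<alpha> \<omega> t S (indicator Q) x \<le> A * t powr (- (\<alpha> + d)) * lq ^ CARD('n)"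
          unfolding Kop_eq using A0 lq0 by (intro integral_real_bounded) auto
        also have "A * t powr (- (\<alpha> + d)) \<le> (t * s) powr (\<alpha> / 2) * t powr (- (\<alpha> + d))"
          using AA by (rule mult_right_mono) simp
        also have "\<dots> \<le> 2 powr (\<alpha> / 2 + d) * ((s / L) powr (\<alpha> / 2) / L powr d)"
          by (rule alg2[OF s0 L0 _ a d0]) (use t1 L_def in simp)
        also have "L powr d = L ^ CARD('n)" unfolding d_def using L0 by (simp add: powr_realpow)
        finally have "Kop \<alpha> \<omega> t S (indicator Q) x \<le> 2 powr (\<alpha> / 2 + d) * ((lq ^ CARD('n) / L ^ CARD('n)) * (s / L) powr (\<alpha> / 2))"
          using lq0 by (simp add: mult_right_mono field_simps)
        also have "\<dots> \<le> C * ((lq ^ CARD('n) / L ^ CARD('n)) * (s / L) powr (\<alpha> / 2))"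
          using C3 lq0 L0 by (intro mult_right_mono) auto
        finally show ?thesis
          using measure_grid(1)[OF Q] measure_grid(1)[OF R] unfolding s_def L_def lq_def by (simp add: mult.assoc)
      qed
      show "Kop \<alpha> \<omega> t S (indicator (UNIV - Q)) x
        \<le> C * (dside \<omega> S / max (dside \<omega> (dancestor \<omega> r R)) (dside \<omega> Q)) powr (\<alpha> / 4)"
      proof -
        have anc: "dside \<omega> (dancestor \<omega> r R) = 2 ^ r * L" unfolding L_def by (rule dside_dancestor[OF R])
        have LrL: "L \<le> 2 ^ r * L" using L0 by simp
        show ?thesis
        proof (cases "lq \<le> 2 ^ r * L")
          case True
          have M: "max (dside \<omega> (dancestor \<omega> r R)) (dside \<omega> Q) = 2 ^ r * L"
            using True anc lq_def by simp
          have pt: "ennreal (A * (t + linf (x - y)) powr (- (\<alpha> + d)) * \<bar>indicator (UNIV - Q) y\<bar>)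
              \<le> ennreal (A * (t + linf (x - y)) powr (- (\<alpha> + d)))" for y
            using A0 by (intro ennreal_leI) (auto simp: indicator_def)
          have "(\<integral>\<^sup>+ y. ennreal (A * (t + linf (x - y)) powr (- (\<alpha> + d)) * \<bar>indicator (UNIV - Q) y\<bar>) \<partial>lborel)
              \<le> (\<integral>\<^sup>+ y. ennreal (A * (t + linf (x - y)) powr (- (\<alpha> + d))) \<partial>lborel)"
            by (rule nn_integral_mono) (rule pt)
          also have "\<dots> \<le> ennreal (A * (Kw * t powr (- \<alpha>)))"
            using K_whole[OF t0 a A0, of x] unfolding Kw_def T_def d_def .
          finally have "Kop \<alpha> \<omega> t S (indicator (UNIV - Q)) x \<le> A * (Kw * t powr (- \<alpha>))"
            unfolding Kop_eq using A0 Kw0 by (intro integral_real_bounded) auto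
          also have "\<dots> = Kw * (A * t powr (- \<alpha>))" by simp
          also have "A * t powr (- \<alpha>) \<le> (t * s) powr (\<alpha> / 2) * t powr (- \<alpha>)"
            using AA by (rule mult_right_mono) simp
          also have "\<dots> \<le> 2 powr (\<alpha> / 2) * (s / L) powr (\<alpha> / 2)"
            by (rule alga[OF s0 L0 _ a]) (use t1 L_def in simp)
          also have "(s / L) powr (\<alpha> / 2) = 2 powr (\<alpha> / 2 * real r) * (s / (2 ^ r * L)) powr (\<alpha> / 2)"
            by (rule algM[OF s0 L0])
          also have "(s / (2 ^ r * L)) powr (\<alpha> / 2) \<le> (s / (2 ^ r * L)) powr (\<alpha> / 4)"
          proof (rule powr_mono')
            have "s \<le> 2 ^ r * L" using sL LrL by linarith
            then show "s / (2 ^ r * L) \<le> 1" using L0 by simp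
          qed (use s0 L0 a in auto)
          finally have "Kop \<alpha> \<omega> t S (indicator (UNIV - Q)) x
              \<le> (Kw * (2 powr (\<alpha> / 2) * 2 powr (\<alpha> / 2 * real r))) * (s / (2 ^ r * L)) powr (\<alpha> / 4)"
            using Kw0 by (simp add: mult_left_mono mult.assoc)
          also have "Kw * (2 powr (\<alpha> / 2) * 2 powr (\<alpha> / 2 * real r)) = Kw * 2 powr (\<alpha> / 2 * real (r + 1))"
          proof -
            have "\<alpha> / 2 + \<alpha> / 2 * real r = \<alpha> / 2 * real (r + 1)" by (simp add: algebra_simps)
            then show ?thesis by (simp only: powr_add[symmetric])
          qed
          also have "\<dots> * (s / (2 ^ r * L)) powr (\<alpha> / 4) \<le> C * (s / (2 ^ r * L)) powr (\<alpha> / 4)"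
            using C1 by (rule mult_right_mono) simp
          finally show ?thesis unfolding M s_def .
        next
          case False
          have M: "max (dside \<omega> (dancestor \<omega> r R)) (dside \<omega> Q) = lq"
            using False anc lq_def by simp
          have "2 ^ r * s \<le> 2 ^ r * L" by (rule mult_left_mono[OF sL]) simp
          then have big: "2 ^ r * dside \<omega> S \<le> dside \<omega> Q" using False unfolding s_def lq_def by linarith
          define D where "D = s powr \<gamma> * lq powr (1 - \<gamma>)"
          have D0: "0 < D" unfolding D_def using s0 lq0 by simp
          have Dlt: "D < linf_setdist S (frontier Q)"
            using good Q big unfolding r_good_def D_def s_def lq_def \<gamma>_def d_def by blast
          have pt: "ennreal (A * (t + linf (x - y)) powr (- (\<alpha> + d)) * \<bar>indicator (UNIV - Q) y\<bar>)
              \<le> ennreal A * tser (\<alpha> + d) D x y" for y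
          proof (cases "y \<in> Q")
            case False
            have Dy: "D \<le> linf (x - y)" using Dlt dist_frontier[OF x SQ False] by simp
            have "(t + linf (x - y)) powr (- (\<alpha> + d)) \<le> linf (x - y) powr (- (\<alpha> + d))"
              using t0 Dy D0 a d0 by (intro powr_mono2') auto
            then have "ennreal (A * (t + linf (x - y)) powr (- (\<alpha> + d))) \<le> ennreal A * ennreal (linf (x - y) powr (- (\<alpha> + d)))"
              using A0 by (simp add: ennreal_mult[symmetric] mult_left_mono)
            also have "\<dots> \<le> ennreal A * tser (\<alpha> + d) D x y"
              using D0 Dy a d0 by (intro mult_left_mono tser_point) auto
            finally show ?thesis using False by simp
          qed simp
          have "(\<integral>\<^sup>+ y. ennreal (A * (t + linf (x - y)) powr (- (\<alpha> + d)) * \<bar>indicator (UNIV - Q) y\<bar>) \<partial>lborel)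
              \<le> (\<integral>\<^sup>+ y. ennreal A * tser (\<alpha> + d) D x y \<partial>lborel)"
            by (rule nn_integral_mono) (rule pt)
          also have "\<dots> = ennreal A * (\<integral>\<^sup>+ y. tser (\<alpha> + d) D x y \<partial>lborel)"
            by (rule nn_integral_cmult) simp
          also have "(\<integral>\<^sup>+ y. tser (\<alpha> + d) D x y \<partial>lborel) = ennreal (T * D powr (- \<alpha>))"
            using tser_int[OF D0 a, of x] unfolding T_def d_def by (simp add: algebra_simps)
          also have "ennreal A * ennreal (T * D powr (- \<alpha>)) = ennreal (A * (T * D powr (- \<alpha>)))"
            using A0 T0 by (intro ennreal_mult[symmetric]) auto
          finally have "Kop \<alpha> \<omega> t S (indicator (UNIV - Q)) x \<le> A * (T * D powr (- \<alpha>))"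
            unfolding Kop_eq using A0 T0 by (intro integral_real_bounded) auto
          also have "\<dots> = T * (A * D powr (- \<alpha>))" by simp
          also have "A * D powr (- \<alpha>) \<le> (lq * s) powr (\<alpha> / 2) * D powr (- \<alpha>)"
          proof (rule mult_right_mono)
            have "t \<le> lq" using t2 LrL False L_def by simp
            then have "(t * s) powr (\<alpha> / 2) \<le> (lq * s) powr (\<alpha> / 2)"
              using t0 s0 a by (intro powr_mono2 mult_right_mono) auto
            then show "A \<le> (lq * s) powr (\<alpha> / 2)" using AA by simp
          qed simp
          also have "\<dots> = (s / lq) powr (\<alpha> / 2 - \<gamma> * \<alpha>)" unfolding D_def by (rule algb[OF s0 lq0])
          also have "\<dots> \<le> (s / lq) powr (\<alpha> / 4)"
          proof (rule powr_mono')
            show "\<alpha> / 4 \<le> \<alpha> / 2 - \<gamma> * \<alpha>" using g4 a by (simp add: field_simps)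
          qed (use s0 lq0 slq in auto)
          finally have "Kop \<alpha> \<omega> t S (indicator (UNIV - Q)) x \<le> T * (s / lq) powr (\<alpha> / 4)"
            using T0 by (simp add: mult_left_mono)
          also have "\<dots> \<le> C * (s / lq) powr (\<alpha> / 4)" using C2 by (rule mult_right_mono) simp
          finally show ?thesis unfolding M s_def .
        qed
      qed
    qed
  qed
qed

end
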